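(* Let $A\in \mathbb{Z}^{m\times n}$, $b\in \mathbb{Z}^m$ and $p$ a prime. Then exactly one of the following holds: either $Ax=b$ has a $p$-adic solution $x$, or there exists $y\in \mathbb{R}^m$ such that $y^\top A$ is integral and $y^\top b$ is not a $p$-adic rational.
   Context: A $p$-adic rational is a number $a/p^k$ with $a,k\in\mathbb{Z}$, $k\ge0$; a vector is $p$-adic if all entries are $p$-adic rationals. *)

theory Defs
  imports "HOL-Analysis.Analysis"
begin

definition p_adic_rat :: "nat \<Rightarrow> real \<Rightarrow> bool" where
  "p_adic_rat p r \<longleftrightarrow> (\<exists>(a::int) (k::nat). r = of_int a / (real p) ^ k)"

definition p_adic_vec :: "nat \<Rightarrow> real ^ 'n \<Rightarrow> bool" where
  "p_adic_vec p x \<longleftrightarrow> (\<forall>i. p_adic_rat p (x $ i))"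

definition int_vec :: "real ^ 'n \<Rightarrow> bool" where
  "int_vec x \<longleftrightarrow> (\<forall>i. x $ i \<in> \<int>)"

definition int_mat :: "real ^ 'n ^ 'm \<Rightarrow> bool" where
  "int_mat A \<longleftrightarrow> (\<forall>i j. A $ i $ j \<in> \<int>)"

end

theory Submission
  imports Defs
begin


lemma padic_int: "x \<in> \<int> \<Longrightarrow> p_adic_rat p x"
proof -
  assume "x \<in> \<int>" then obtain z where "x = of_int z" by (auto elim: Ints_cases)
  hence "x = of_int z / real p ^ 0" by simp
  thus ?thesis unfolding p_adic_rat_def by blast
qed

lemma padic_add: assumes "p > 0" "p_adic_rat p x" "p_adic_rat p y" shows "p_adic_rat p (x + y)"
proof -
  obtain a k b l where x: "x = of_int a / real p ^ k" and y: "y = of_int b / real p ^ l"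
    using assms unfolding p_adic_rat_def by blast
  have "x + y = of_int (a * int p ^ l + b * int p ^ k) / real p ^ (k + l)"
    using assms(1) by (simp add: x y field_simps power_add)
  thus ?thesis unfolding p_adic_rat_def by blast
qed

lemma padic_mult: assumes "p_adic_rat p x" "p_adic_rat p y" shows "p_adic_rat p (x * y)"
proof -
  obtain a k b l where x: "x = of_int a / real p ^ k" and y: "y = of_int b / real p ^ l"
    using assms unfolding p_adic_rat_def by blast
  have "x * y = of_int (a * b) / real p ^ (k + l)"
    by (simp add: x y power_add)
  thus ?thesis unfolding p_adic_rat_def by blast
qed

lemma padic_neg: assumes "p_adic_rat p x" shows "p_adic_rat p (- x)"
  using padic_mult[OF padic_int[of "-1"] assms] by simp

lemma padic_diff: assumes "p > 0" "p_adic_rat p x" "p_adic_rat p y" shows "p_adic_rat p (x - y)"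
  using padic_add[OF assms(1,2) padic_neg[OF assms(3)]] by simp

lemma padic_sum: assumes "p > 0" shows "(\<And>x. x \<in> S \<Longrightarrow> p_adic_rat p (f x)) \<Longrightarrow> p_adic_rat p (sum f S)"
proof (induction S rule: infinite_finite_induct)
  case (infinite A) then show ?case by (simp add: padic_int)
next
  case empty then show ?case by (simp add: padic_int)
next
  case (insert x F) then show ?case using padic_add[OF assms] by simp
qed

lemma not_padic: assumes "prime p" shows "\<not> p_adic_rat p (1 / (real p + 1))"
proof
  assume "p_adic_rat p (1 / (real p + 1))"
  then obtain a k where h: "1 / (real p + 1) = of_int a / real p ^ k" unfolding p_adic_rat_def by blast
  have pp: "real p > 0" using assms prime_gt_0_nat by simp
  have "real p ^ k = of_int a * (real p + 1)" using h pp by (simp add: field_simps)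
  hence "real_of_int (int p ^ k) = real_of_int (a * (int p + 1))" by simp
  hence "int p ^ k = a * (int p + 1)" by (simp only: of_int_eq_iff)
  hence "(int p + 1) dvd int p ^ k" by simp
  moreover have "coprime (int p + 1) (int p ^ k)"
    by (simp add: coprime_power_right_iff)
  ultimately have "\<bar>int p + 1\<bar> = 1" using coprime_common_divisor_int[of "int p + 1" "int p ^ k" "int p + 1"] by simp
  moreover have "int p \<ge> 2" using assms prime_ge_2_nat by simp
  ultimately show False by simp
qed



lemma bezout_set:
  fixes f :: "'a \<Rightarrow> int"
  assumes "finite C" "c1 \<in> C" "f c1 \<noteq> 0"
  shows "\<exists>u g. g > 0 \<and> (\<Sum>c\<in>C. u c * f c) = g \<and> (\<forall>c\<in>C. g dvd f c)"
proof -
  define G where "G = {n::nat. n > 0 \<and> (\<exists>u. (\<Sum>c\<in>C. u c * f c) = int n)}"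
  define u1 where "u1 = (\<lambda>c. if c = c1 then sgn (f c1) else 0)"
  have "(\<Sum>c\<in>C. u1 c * f c) = (\<Sum>c\<in>C. if c = c1 then sgn (f c1) * f c1 else 0)"
    unfolding u1_def by (rule sum.cong) auto
  also have "\<dots> = \<bar>f c1\<bar>" using assms by (simp add: sum.delta' sgn_mult_abs abs_sgn)
  finally have "nat \<bar>f c1\<bar> \<in> G" unfolding G_def using assms(3) by auto
  hence gG: "(LEAST n. n \<in> G) \<in> G" by (rule LeastI)
  define g where "g = int (LEAST n. n \<in> G)"
  from gG obtain u0 where u0: "(\<Sum>c\<in>C. u0 c * f c) = g" and gpos: "g > 0"
    unfolding G_def g_def by auto
  have "g dvd f c" if c: "c \<in> C" for c
  proof (rule ccontr)
    assume nd: "\<not> g dvd f c"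
    define q where "q = f c div g"
    define r where "r = f c mod g"
    have r0: "r > 0" using nd gpos unfolding r_def
      by (metis dvd_eq_mod_eq_0 order_le_less pos_mod_sign)
    have rl: "r < g" using gpos unfolding r_def by simp
    define u where "u = (\<lambda>d. (if d = c then 1 else 0) - q * u0 d)"
    have "(\<Sum>d\<in>C. u d * f d) = (\<Sum>d\<in>C. (if d = c then f d else 0) - q * (u0 d * f d))"
      by (rule sum.cong) (auto simp: u_def algebra_simps)
    also have "\<dots> = (\<Sum>d\<in>C. (if d = c then f d else 0)) - q * (\<Sum>d\<in>C. u0 d * f d)"
      by (simp add: sum_subtractf sum_distrib_left)
    also have "\<dots> = f c - q * g" using c assms(1) u0 by (simp add: sum.delta')
    also have "\<dots> = r" unfolding q_def r_def by (metis minus_mult_div_eq_mod mult.commute)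
    finally have "nat r \<in> G" unfolding G_def using r0 by auto
    hence "(LEAST n. n \<in> G) \<le> nat r" by (rule Least_le)
    thus False using rl r0 unfolding g_def by linarith
  qed
  thus ?thesis using u0 gpos by blast
qed

definition Rspan :: "nat \<Rightarrow> (real^'m) set \<Rightarrow> (real^'m) set" where
  "Rspan p C = {v. \<exists>x. (\<forall>c\<in>C. p_adic_rat p (x c)) \<and> v = (\<Sum>c\<in>C. x c *\<^sub>R c)}"

definition dotI :: "'m set \<Rightarrow> real^'m \<Rightarrow> real^'m \<Rightarrow> real" where
  "dotI I y v = (\<Sum>i\<in>I. y$i * v$i)"

lemma sum_in_M:
  assumes "(0::'b::comm_monoid_add) \<in> M" "\<forall>u v. u\<in>M \<longrightarrow> v\<in>M \<longrightarrow> u+v\<in>M"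
  shows "(\<forall>x\<in>S. f x \<in> M) \<Longrightarrow> sum f S \<in> M"
proof (induction S rule: infinite_finite_induct)
  case (infinite A) then show ?case using assms by simp
next
  case empty then show ?case using assms by simp
next
  case (insert x F) then show ?case using assms by simp
qed

lemma Rspan_sub:
  assumes "0 \<in> M" "\<forall>u v. u\<in>M \<longrightarrow> v\<in>M \<longrightarrow> u+v\<in>M"
    "\<forall>a v. p_adic_rat p a \<longrightarrow> v\<in>M \<longrightarrow> a *\<^sub>R v \<in> M" "C \<subseteq> M"
  shows "Rspan p C \<subseteq> M"
proof
  fix v assume "v \<in> Rspan p C"
  then obtain x where x: "\<forall>c\<in>C. p_adic_rat p (x c)" "v = (\<Sum>c\<in>C. x c *\<^sub>R c)"
    unfolding Rspan_def by blast
  show "v \<in> M" unfolding x(2) by (rule sum_in_M[OF assms(1,2)]) (use x(1) assms(3,4) in blast)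
qed

lemma Rspan_zero: "0 \<in> Rspan p C"
  by (unfold Rspan_def mem_Collect_eq, rule exI[of _ "\<lambda>_. 0"], simp add: padic_int)

lemma Rspan_add: assumes "p > 0" "u \<in> Rspan p C" "v \<in> Rspan p C" shows "u + v \<in> Rspan p C"
proof -
  obtain x where x: "\<forall>c\<in>C. p_adic_rat p (x c)" "u = (\<Sum>c\<in>C. x c *\<^sub>R c)"
    using assms(2) unfolding Rspan_def by blast
  obtain x' where x': "\<forall>c\<in>C. p_adic_rat p (x' c)" "v = (\<Sum>c\<in>C. x' c *\<^sub>R c)"
    using assms(3) unfolding Rspan_def by blast
  have f1: "u + v = (\<Sum>c\<in>C. (x c + x' c) *\<^sub>R c)" unfolding x x' by (simp add: sum.distrib scaleR_add_left)
  have f2: "\<forall>c\<in>C. p_adic_rat p (x c + x' c)" using x(1) x'(1) padic_add[OF assms(1)] by blast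
  have "\<exists>z. (\<forall>c\<in>C. p_adic_rat p (z c)) \<and> u + v = (\<Sum>c\<in>C. z c *\<^sub>R c)"
    by (rule exI[of _ "\<lambda>c. x c + x' c"]) (use f1 f2 in simp)
  thus ?thesis unfolding Rspan_def by simp
qed

lemma Rspan_scale: assumes "p_adic_rat p a" "v \<in> Rspan p C" shows "a *\<^sub>R v \<in> Rspan p C"
proof -
  obtain x' where x': "\<forall>c\<in>C. p_adic_rat p (x' c)" "v = (\<Sum>c\<in>C. x' c *\<^sub>R c)"
    using assms(2) unfolding Rspan_def by blast
  have f1: "a *\<^sub>R v = (\<Sum>c\<in>C. (a * x' c) *\<^sub>R c)" unfolding x' by (simp add: scaleR_sum_right)
  have f2: "\<forall>c\<in>C. p_adic_rat p (a * x' c)" using x'(1) padic_mult[OF assms(1)] by blast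
  have "\<exists>z. (\<forall>c\<in>C. p_adic_rat p (z c)) \<and> a *\<^sub>R v = (\<Sum>c\<in>C. z c *\<^sub>R c)"
    by (rule exI[of _ "\<lambda>c. a * x' c"]) (use f1 f2 in simp)
  thus ?thesis unfolding Rspan_def by simp
qed

lemma Rspan_elem: assumes "finite C" "c \<in> C" shows "c \<in> Rspan p C"
proof -
  have "(\<Sum>d\<in>C. (if d = c then 1 else 0) *\<^sub>R d) = (\<Sum>d\<in>C. if d = c then d else 0)"
    by (rule sum.cong) auto
  also have "\<dots> = c" using assms by (simp add: sum.delta')
  finally have f1: "(\<Sum>d\<in>C. (if d = c then 1 else 0) *\<^sub>R d) = c" .
  have "\<exists>z. (\<forall>d\<in>C. p_adic_rat p (z d)) \<and> c = (\<Sum>d\<in>C. z d *\<^sub>R d)"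
    by (rule exI[of _ "\<lambda>d. if d = c then 1 else 0"]) (use f1 in \<open>simp add: padic_int\<close>)
  thus ?thesis unfolding Rspan_def by simp
qed

lemma Rspan_intcomb: assumes "p > 0" "finite C"
  shows "(\<Sum>c\<in>C. of_int (u c) *\<^sub>R c) \<in> Rspan p C"
proof (rule sum_in_M[OF Rspan_zero])
  show "\<forall>u v. u \<in> Rspan p C \<longrightarrow> v \<in> Rspan p C \<longrightarrow> u + v \<in> Rspan p C"
    using Rspan_add[OF assms(1)] by blast
  show "\<forall>x\<in>C. of_int (u x) *\<^sub>R x \<in> Rspan p C"
    using Rspan_scale[OF padic_int[OF Ints_of_int]] Rspan_elem[OF assms(2)] by blast
qed

lemma Rspan_mono: assumes "p > 0" "C' \<subseteq> Rspan p C" shows "Rspan p C' \<subseteq> Rspan p C"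
proof (rule Rspan_sub[OF Rspan_zero])
  show "\<forall>u v. u \<in> Rspan p C \<longrightarrow> v \<in> Rspan p C \<longrightarrow> u + v \<in> Rspan p C"
    using Rspan_add[OF assms(1)] by blast
  show "\<forall>a v. p_adic_rat p a \<longrightarrow> v \<in> Rspan p C \<longrightarrow> a *\<^sub>R v \<in> Rspan p C"
    using Rspan_scale by blast
qed (rule assms(2))

lemma dotI_insert: "finite I \<Longrightarrow> i0 \<notin> I \<Longrightarrow> dotI (insert i0 I) y v = y$i0 * v$i0 + dotI I y v"
  unfolding dotI_def by simp

lemma dotI_add: "dotI I y (v + w) = dotI I y v + dotI I y w"
  unfolding dotI_def by (simp add: algebra_simps sum.distrib)
lemma dotI_diff: "dotI I y (v - w) = dotI I y v - dotI I y w"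
  unfolding dotI_def by (simp add: algebra_simps sum_subtractf)
lemma dotI_scale: "dotI I y (a *\<^sub>R v) = a * dotI I y v"
  unfolding dotI_def by (simp add: algebra_simps sum_distrib_left)
lemma dotI_sum: "dotI I y (sum f S) = (\<Sum>c\<in>S. dotI I y (f c))"
  unfolding dotI_def by (simp add: sum_distrib_left sum.swap[of _ I S])



lemma main_lemma:
  fixes I :: "'m::finite set" and C :: "(real^'m) set" and b :: "real^'m"
  assumes p: "prime p" and fin: "finite I"
  shows "finite C \<Longrightarrow> (\<forall>c\<in>C. \<forall>i\<in>I. c$i \<in> \<int>) \<Longrightarrow> (\<forall>i\<in>I. p_adic_rat p (b$i)) \<Longrightarrow>
    (\<exists>v\<in>Rspan p C. \<forall>i\<in>I. b$i = v$i) \<or>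
    (\<exists>y::real^'m. (\<forall>c\<in>C. dotI I y c \<in> \<int>) \<and> \<not> p_adic_rat p (dotI I y b))"
  using fin
proof (induction I arbitrary: C b rule: finite_induct)
  case empty
  then show ?case using Rspan_zero by blast
next
  case (insert i0 I)
  have p0: "p > 0" using p prime_gt_0_nat by blast
  have finC: "finite C" using insert.prems(1) .
  have Cint: "\<forall>c\<in>C. \<forall>i\<in>I. c$i \<in> \<int>" using insert.prems(2) by blast
  have Ci0: "\<forall>c\<in>C. c$i0 \<in> \<int>" using insert.prems(2) by blast
  have bI: "\<forall>i\<in>I. p_adic_rat p (b$i)" using insert.prems(3) by blast
  have bi0: "p_adic_rat p (b$i0)" using insert.prems(3) by blast
  note dins = dotI_insert[OF insert.hyps(1,2)]
  show ?case
  proof (cases "\<forall>c\<in>C. c$i0 = 0")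
    case zero: True
    show ?thesis
    proof (cases "b$i0 = 0")
      case True
      from insert.IH[OF finC Cint bI] show ?thesis
      proof
        assume "\<exists>v\<in>Rspan p C. \<forall>i\<in>I. b$i = v$i"
        then obtain v where v: "v \<in> Rspan p C" "\<forall>i\<in>I. b$i = v$i" by blast
        have "Rspan p C \<subseteq> {w. w$i0 = 0}"
          by (rule Rspan_sub) (use zero in auto)
        hence "v$i0 = 0" using v(1) by blast
        hence "\<forall>i\<in>insert i0 I. b$i = v$i" using v(2) True by simp
        thus ?thesis using v(1) by blast
      next
        assume "\<exists>y. (\<forall>c\<in>C. dotI I y c \<in> \<int>) \<and> \<not> p_adic_rat p (dotI I y b)"
        then obtain y where y: "\<forall>c\<in>C. dotI I y c \<in> \<int>" "\<not> p_adic_rat p (dotI I y b)" by blast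
        have "\<forall>c\<in>C. dotI (insert i0 I) y c \<in> \<int>" using y(1) zero dins by simp
        moreover have "\<not> p_adic_rat p (dotI (insert i0 I) y b)" using y(2) True dins by simp
        ultimately show ?thesis by blast
      qed
    next
      case False
      define y :: "real^'m" where "y = (\<chi> i. if i = i0 then 1 / ((real p + 1) * b$i0) else 0)"
      have yI: "dotI I y v = 0" for v
        unfolding dotI_def y_def using insert.hyps(2) by (intro sum.neutral) auto
      have F1: "\<forall>c\<in>C. dotI (insert i0 I) y c \<in> \<int>" using zero dins yI by simp
      have F2: "dotI (insert i0 I) y b = 1 / (real p + 1)"
        using dins yI False by (simp add: y_def)
      show ?thesis by (rule disjI2, rule exI[of _ y]) (use F1 F2 not_padic[OF p] in simp)
    qed
  next
    case False
    then obtain c1 where c1: "c1 \<in> C" "c1$i0 \<noteq> 0" by blast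
    define ri where "ri c = \<lfloor>c$i0\<rfloor>" for c :: "real^'m"
    have ri: "c$i0 = of_int (ri c)" if "c \<in> C" for c
      using Ci0 that unfolding ri_def by (metis Ints_cases floor_of_int)
    have "ri c1 \<noteq> 0" using ri[OF c1(1)] c1(2) by auto
    from bezout_set[of C c1 ri, OF finC c1(1) this] obtain u0 g where
      g: "g > 0" "(\<Sum>c\<in>C. u0 c * ri c) = g" "\<forall>c\<in>C. g dvd ri c" by blast
    have gdiv: "(of_int (ri c) :: real) = of_int g * of_int (ri c div g)" if "c \<in> C" for c
      using g(3) that by (metis dvd_mult_div_cancel of_int_mult)
    have g0: "(of_int g :: real) \<noteq> 0" using g(1) by simp
    define s where "s = b$i0 / of_int g"
    show ?thesis
    proof (cases "p_adic_rat p s")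
      case False
      define y :: "real^'m" where "y = (\<chi> i. if i = i0 then 1 / of_int g else 0)"
      have yI: "dotI I y v = 0" for v
        unfolding dotI_def y_def using insert.hyps(2) by (intro sum.neutral) auto
      have "dotI (insert i0 I) y c \<in> \<int>" if "c \<in> C" for c
      proof -
        have "dotI (insert i0 I) y c = of_int (ri c) / of_int g" using dins yI ri[OF that] by (simp add: y_def)
        also have "\<dots> = of_int (ri c div g)" using gdiv[OF that] g0 by simp
        finally show ?thesis by simp
      qed
      moreover have "dotI (insert i0 I) y b = s" using dins yI by (simp add: y_def s_def)
      ultimately show ?thesis using False by (intro disjI2 exI[of _ y]) simp
    next
      case True
      define z0 where "z0 = (\<Sum>c\<in>C. of_int (u0 c) *\<^sub>R c)"
      define k where "k c d = of_int (ri c div g) *\<^sub>R d - of_int (ri d div g) *\<^sub>R c" for c d :: "real^'m"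
      define C' where "C' = (\<lambda>(c,d). k c d) ` (C \<times> C)"
      define b' where "b' = b - s *\<^sub>R z0"
      have finC': "finite C'" unfolding C'_def using finC by simp
      have C'int: "\<forall>c\<in>C'. \<forall>i\<in>I. c$i \<in> \<int>"
        unfolding C'_def k_def using Cint by (auto intro!: Ints_diff Ints_mult)
      have z0int: "z0$i \<in> \<int>" if "i \<in> I" for i
        unfolding z0_def using Cint that by (auto intro!: Ints_sum Ints_mult)
      have b'p: "\<forall>i\<in>I. p_adic_rat p (b'$i)"
        unfolding b'_def using bI padic_diff[OF p0 _ padic_mult[OF True padic_int[OF z0int]]] by simp
      have ki0: "k c d $ i0 = 0" if "c \<in> C" "d \<in> C" for c d
      proof -
        have "k c d $ i0 = of_int (ri c div g) * (of_int g * of_int (ri d div g))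
               - of_int (ri d div g) * (of_int g * of_int (ri c div g))"
          unfolding k_def using ri[OF that(1)] ri[OF that(2)] gdiv[OF that(1)] gdiv[OF that(2)] by simp
        thus ?thesis by simp
      qed
      from insert.IH[OF finC' C'int b'p] show ?thesis
      proof
        assume "\<exists>v\<in>Rspan p C'. \<forall>i\<in>I. b'$i = v$i"
        then obtain v' where v': "v' \<in> Rspan p C'" "\<forall>i\<in>I. b'$i = v'$i" by blast
        have z0R: "z0 \<in> Rspan p C" unfolding z0_def by (rule Rspan_intcomb[OF p0 finC])
        have "C' \<subseteq> Rspan p C"
        proof
          fix w assume "w \<in> C'"
          then obtain c d where cd: "c \<in> C" "d \<in> C" "w = k c d" unfolding C'_def by auto
          have eq: "w = of_int (ri c div g) *\<^sub>R d + (- of_int (ri d div g)) *\<^sub>R c"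
            unfolding cd(3) k_def by simp
          have A: "of_int (ri c div g) *\<^sub>R d \<in> Rspan p C"
            by (rule Rspan_scale[OF padic_int[OF Ints_of_int] Rspan_elem[OF finC cd(2)]])
          have B: "(- of_int (ri d div g)) *\<^sub>R c \<in> Rspan p C"
            by (rule Rspan_scale[OF padic_int Rspan_elem[OF finC cd(1)]]) simp
          show "w \<in> Rspan p C" unfolding eq by (rule Rspan_add[OF p0 A B])
        qed
        hence v'R: "v' \<in> Rspan p C" using Rspan_mono[OF p0] v'(1) by blast
        have "Rspan p C' \<subseteq> {w. w$i0 = 0}"
          by (rule Rspan_sub) (use ki0 in \<open>auto simp: C'_def\<close>)
        hence v'0: "v'$i0 = 0" using v'(1) by blast
        define v where "v = s *\<^sub>R z0 + v'"
        have vR: "v \<in> Rspan p C" unfolding v_def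
          by (rule Rspan_add[OF p0 Rspan_scale[OF True z0R] v'R])
        have "z0$i0 = (\<Sum>c\<in>C. of_int (u0 c) * c$i0)" unfolding z0_def by simp
        also have "\<dots> = (\<Sum>c\<in>C. of_int (u0 c * ri c))" using ri by (intro sum.cong) auto
        also have "\<dots> = of_int g" by (subst of_int_sum[symmetric]) (simp add: g(2))
        finally have z0i0: "z0$i0 = of_int g" .
        have "b$i0 = v$i0" unfolding v_def using v'0 z0i0 g0 by (simp add: s_def)
        moreover have "b$i = v$i" if "i \<in> I" for i
        proof -
          have "b$i - s * z0$i = v'$i" using v'(2) that unfolding b'_def by simp
          thus ?thesis unfolding v_def by simp
        qed
        ultimately have "\<forall>i\<in>insert i0 I. b$i = v$i" by blast
        thus ?thesis using vR by blast
      next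
        assume "\<exists>y. (\<forall>c\<in>C'. dotI I y c \<in> \<int>) \<and> \<not> p_adic_rat p (dotI I y b')"
        then obtain y' where y': "\<forall>c\<in>C'. dotI I y' c \<in> \<int>" "\<not> p_adic_rat p (dotI I y' b')" by blast
        define \<alpha> where "\<alpha> c = dotI I y' c" for c
        define t where "t = - (\<Sum>c\<in>C. of_int (u0 c) * \<alpha> c) / of_int g"
        define y :: "real^'m" where "y = (\<chi> i. if i = i0 then t else y'$i)"
        have dy: "dotI I y v = dotI I y' v" for v
          unfolding dotI_def y_def using insert.hyps(2) by (intro sum.cong) auto
        have yi0: "y$i0 = t" unfolding y_def by simp
        have sum1: "(\<Sum>d\<in>C. of_int (u0 d) * of_int (ri d div g)) = (1::real)"
        proof -
          have "of_int g * (\<Sum>d\<in>C. of_int (u0 d) * of_int (ri d div g)) = (\<Sum>d\<in>C. of_int (u0 d) * (of_int g * of_int (ri d div g)) :: real)"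
            by (simp add: sum_distrib_left algebra_simps)
          also have "\<dots> = (\<Sum>d\<in>C. of_int (u0 d * ri d))" using gdiv by (intro sum.cong) auto
          also have "\<dots> = of_int g" by (subst of_int_sum[symmetric]) (simp add: g(2))
          finally show ?thesis using g0 by simp
        qed
        have F1: "dotI (insert i0 I) y c \<in> \<int>" if c: "c \<in> C" for c
        proof -
          have kd: "dotI I y' (k d c) = of_int (ri d div g) * \<alpha> c - of_int (ri c div g) * \<alpha> d" for d
            unfolding k_def \<alpha>_def by (simp add: dotI_diff dotI_scale)
          have e1: "dotI (insert i0 I) y c = t * c$i0 + \<alpha> c" using dins dy yi0 unfolding \<alpha>_def by simp
          have e2: "t * c$i0 = - of_int (ri c div g) * (\<Sum>d\<in>C. of_int (u0 d) * \<alpha> d)"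
          proof -
            have "t * c$i0 = t * (of_int g * of_int (ri c div g))" using ri[OF c] gdiv[OF c] by simp
            also have "\<dots> = - of_int (ri c div g) * (\<Sum>d\<in>C. of_int (u0 d) * \<alpha> d)"
              unfolding t_def using g0 by simp
            finally show ?thesis .
          qed
          have e3: "(\<Sum>d\<in>C. of_int (u0 d) * dotI I y' (k d c)) =
              (\<Sum>d\<in>C. \<alpha> c * (of_int (u0 d) * of_int (ri d div g)) - of_int (ri c div g) * (of_int (u0 d) * \<alpha> d))"
            unfolding kd by (intro sum.cong) (auto simp: algebra_simps)
          also have "\<dots> = \<alpha> c * (\<Sum>d\<in>C. of_int (u0 d) * of_int (ri d div g)) - of_int (ri c div g) * (\<Sum>d\<in>C. of_int (u0 d) * \<alpha> d)"
            by (simp add: sum_subtractf sum_distrib_left)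
          also have "\<dots> = dotI (insert i0 I) y c" unfolding sum1 e1 e2 by simp
          finally have e4: "dotI (insert i0 I) y c = (\<Sum>d\<in>C. of_int (u0 d) * dotI I y' (k d c))" by simp
          have "(\<Sum>d\<in>C. of_int (u0 d) * dotI I y' (k d c)) \<in> \<int>"
          proof (intro Ints_sum Ints_mult Ints_of_int)
            fix d assume d: "d \<in> C"
            have "(d, c) \<in> C \<times> C" using c d by simp
            moreover have "k d c = (\<lambda>(c,d). k c d) (d, c)" by simp
            ultimately have "k d c \<in> C'" unfolding C'_def by (rule rev_image_eqI)
            thus "dotI I y' (k d c) \<in> \<int>" using y'(1) by blast
          qed
          thus ?thesis using e4 by simp
        qed
        have F2: "dotI (insert i0 I) y b = dotI I y' b'"
        proof -
          have "dotI I y' z0 = (\<Sum>c\<in>C. of_int (u0 c) * \<alpha> c)"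
            unfolding z0_def \<alpha>_def by (simp add: dotI_sum dotI_scale)
          hence "dotI I y' z0 = - t * of_int g" unfolding t_def using g0 by simp
          hence "dotI I y' b' = dotI I y' b + s * t * of_int g"
            unfolding b'_def by (simp add: dotI_diff dotI_scale)
          also have "\<dots> = dotI I y' b + t * b$i0" using g0 by (simp add: s_def)
          finally show ?thesis using dins dy yi0 by simp
        qed
        show ?thesis by (rule disjI2, rule exI[of _ y]) (use F1 F2 y'(2) in simp)
      qed
    qed
  qed
qed



theorem lemma2p3:
  fixes A :: "real ^ 'n ^ 'm" and b :: "real ^ 'm" and p :: nat
  assumes "int_mat A" and "int_vec b" and "prime p"
  shows "(\<exists>x. p_adic_vec p x \<and> A *v x = b) \<longleftrightarrow>
         \<not> (\<exists>y :: real ^ 'm. int_vec (y v* A) \<and> \<not> p_adic_rat p (y \<bullet> b))"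
proof
  have p0: "p > 0" using assms(3) prime_gt_0_nat by blast
  assume "\<exists>x. p_adic_vec p x \<and> A *v x = b"
  then obtain x where x: "p_adic_vec p x" "A *v x = b" by blast
  show "\<not> (\<exists>y :: real ^ 'm. int_vec (y v* A) \<and> \<not> p_adic_rat p (y \<bullet> b))"
  proof
    assume "\<exists>y :: real ^ 'm. int_vec (y v* A) \<and> \<not> p_adic_rat p (y \<bullet> b)"
    then obtain y :: "real^'m" where y: "int_vec (y v* A)" "\<not> p_adic_rat p (y \<bullet> b)" by blast
    have "y \<bullet> b = (y v* A) \<bullet> x" using x(2) dot_lmul_matrix[of y A x] by simp
    also have "\<dots> = (\<Sum>j\<in>UNIV. (y v* A)$j * x$j)" unfolding inner_vec_def by simp
    finally have "y \<bullet> b = (\<Sum>j\<in>UNIV. (y v* A)$j * x$j)" .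
    moreover have "p_adic_rat p (\<Sum>j\<in>UNIV. (y v* A)$j * x$j)"
    proof (rule padic_sum[OF p0])
      fix j :: 'n
      show "p_adic_rat p ((y v* A)$j * x$j)"
        using padic_mult[OF padic_int] y(1) x(1) unfolding int_vec_def p_adic_vec_def by blast
    qed
    ultimately show False using y(2) by simp
  qed
next
  have p0: "p > 0" using assms(3) prime_gt_0_nat by blast
  assume R: "\<not> (\<exists>y :: real ^ 'm. int_vec (y v* A) \<and> \<not> p_adic_rat p (y \<bullet> b))"
  define col where "col j = (\<chi> i. A$i$j)" for j
  define C where "C = col ` UNIV"
  have finC: "finite C" unfolding C_def by simp
  have Cint: "\<forall>c\<in>C. \<forall>i\<in>UNIV. c$i \<in> \<int>"
    using assms(1) unfolding C_def col_def int_mat_def by auto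
  have bp: "\<forall>i\<in>UNIV. p_adic_rat p (b$i)"
    using assms(2) padic_int unfolding int_vec_def by blast
  from main_lemma[OF assms(3) finite[of "UNIV::'m set"] finC Cint bp] show "\<exists>x. p_adic_vec p x \<and> A *v x = b"
  proof
    assume "\<exists>v\<in>Rspan p C. \<forall>i\<in>UNIV. b$i = v$i"
    then obtain v where v: "v \<in> Rspan p C" "\<forall>i\<in>UNIV. b$i = v$i" by blast
    have bv: "b = v" using v(2) by (simp add: vec_eq_iff)
    define M where "M = {w. \<exists>x. p_adic_vec p x \<and> w = A *v x}"
    have "Rspan p C \<subseteq> M"
    proof (rule Rspan_sub)
      show "0 \<in> M" unfolding M_def p_adic_vec_def
        by (rule CollectI, rule exI[of _ 0]) (simp add: padic_int)
      show "\<forall>u v. u \<in> M \<longrightarrow> v \<in> M \<longrightarrow> u + v \<in> M"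
      proof (intro allI impI)
        fix u v assume "u \<in> M" "v \<in> M"
        then obtain x x' where "p_adic_vec p x" "u = A *v x" "p_adic_vec p x'" "v = A *v x'"
          unfolding M_def by blast
        note h = this
        have h1: "p_adic_vec p (x + x')" using h(1,3) padic_add[OF p0] unfolding p_adic_vec_def by simp
        have h2: "u + v = A *v (x + x')" using h(2,4) by (simp add: matrix_vector_right_distrib)
        show "u + v \<in> M" unfolding M_def by (rule CollectI, rule exI[of _ "x + x'"]) (use h1 h2 in simp)
      qed
      show "\<forall>a v. p_adic_rat p a \<longrightarrow> v \<in> M \<longrightarrow> a *\<^sub>R v \<in> M"
      proof (intro allI impI)
        fix a v assume "p_adic_rat p a" "v \<in> M"
        then obtain x where "p_adic_vec p x" "v = A *v x" unfolding M_def by blast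
        note h = this
        have h1: "p_adic_vec p (a *\<^sub>R x)" using h(1) padic_mult[OF \<open>p_adic_rat p a\<close>] unfolding p_adic_vec_def by simp
        have h2: "a *\<^sub>R v = A *v (a *\<^sub>R x)" using h(2) by (simp add: matrix_vector_mult_scaleR)
        show "a *\<^sub>R v \<in> M" unfolding M_def by (rule CollectI, rule exI[of _ "a *\<^sub>R x"]) (use h1 h2 in simp)
      qed
      show "C \<subseteq> M"
      proof
        fix c assume "c \<in> C"
        then obtain j where j: "c = col j" unfolding C_def by blast
        have h2: "A *v axis j 1 = col j"
          by (simp add: vec_eq_iff matrix_vector_mult_def axis_def col_def if_distrib cong: if_cong)
        have h1: "p_adic_vec p (axis j (1::real))"
          unfolding p_adic_vec_def axis_def by (simp add: padic_int)
        show "c \<in> M" unfolding M_def j by (rule CollectI, rule exI[of _ "axis j 1"]) (use h1 h2 in simp)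
      qed
    qed
    thus ?thesis using v(1) bv unfolding M_def by blast
  next
    assume "\<exists>y::real^'m. (\<forall>c\<in>C. dotI UNIV y c \<in> \<int>) \<and> \<not> p_adic_rat p (dotI UNIV y b)"
    then obtain y :: "real^'m" where y: "\<forall>c\<in>C. dotI UNIV y c \<in> \<int>" "\<not> p_adic_rat p (dotI UNIV y b)" by blast
    have "int_vec (y v* A)"
      unfolding int_vec_def
    proof
      fix j
      have "(y v* A)$j = dotI UNIV y (col j)"
        unfolding vector_matrix_mult_def dotI_def col_def by simp
      thus "(y v* A)$j \<in> \<int>" using y(1) unfolding C_def by simp
    qed
    moreover have "y \<bullet> b = dotI UNIV y b" unfolding inner_vec_def dotI_def by simp
    moreover have "\<not> p_adic_rat p (y \<bullet> b)" using y(2) calculation(2) by simp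
    ultimately have "\<exists>y :: real ^ 'm. int_vec (y v* A) \<and> \<not> p_adic_rat p (y \<bullet> b)" by blast
    thus ?thesis using R by blast
  qed
qed

end
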